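(* Let $0<p<1$, $q=1-p$, and let $\{X_i,i\geq 1\}$ be independent random variables with $P\{X_i=1\}=p$, $P\{X_i=0\}=q$. Let $M_N$ denote the length of the longest consecutive switches in $X_1,\ldots,X_N$ (defined in the context). Then $$\lim_{N\to\infty}\frac{M_N}{\log_{1/\sqrt{pq}} N}=1 \quad \text{almost surely.}$$
   Context: For $m,n\in\mathbb N$ let $S_n^{(m)}:=\sum_{i=m+1}^{n+m-1}\big[(1-X_{i-1})X_i+X_{i-1}(1-X_i)\big]$ be the number of switches (a 0 followed by a 1 or a 1 followed by a 0) among $X_m,\ldots,X_{m+n-1}$. For $m,N\in\mathbb N$ and $n=1,\ldots,N$ let $H_{m,n}^{(N)}:=\bigcup_{i=m}^{m+N-n+1}\{S_n^{(i)}=n-1\}$, and $M_N^{(m)}:=\max_{1\leq n\leq N}\{n-1 : H_{m,n}^{(N)}\neq\emptyset\}$ (the length of the longest consecutive switches in $X_m,\ldots,X_{m+N-1}$). Write $M_N:=M_N^{(1)}$. *)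

theory Defs
  imports "HOL-Probability.Probability"
begin

definition switches :: "(nat \<Rightarrow> 'a \<Rightarrow> real) \<Rightarrow> nat \<Rightarrow> nat \<Rightarrow> 'a \<Rightarrow> real" where
  "switches X n m \<omega> =
     (\<Sum>i\<in>{m+1..n+m-1}. (1 - X (i-1) \<omega>) * X i \<omega> + X (i-1) \<omega> * (1 - X i \<omega>))"

definition switch_event :: "(nat \<Rightarrow> 'a \<Rightarrow> real) \<Rightarrow> nat \<Rightarrow> nat \<Rightarrow> nat \<Rightarrow> 'a set" where
  "switch_event X m n N = (\<Union>i\<in>{m..m+N-n+1}. {\<omega>. switches X n i \<omega> = real n - 1})"

definition longest_switches :: "(nat \<Rightarrow> 'a \<Rightarrow> real) \<Rightarrow> nat \<Rightarrow> nat \<Rightarrow> 'a \<Rightarrow> nat" where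
  "longest_switches X N m \<omega> = Max {n - 1 | n. 1 \<le> n \<and> n \<le> N \<and> \<omega> \<in> switch_event X m n N}"

end

theory Submission
  imports Defs "HOL-Real_Asymp.Real_Asymp"
begin


definition alt :: "(nat \<Rightarrow> 'a \<Rightarrow> real) \<Rightarrow> nat \<Rightarrow> nat \<Rightarrow> 'a \<Rightarrow> bool" where
  "alt X i k \<omega> = (\<forall>l\<in>{i+1..i+k}. X (l-1) \<omega> \<noteq> X l \<omega>)"

definition pat :: "(nat \<Rightarrow> 'a \<Rightarrow> real) \<Rightarrow> nat \<Rightarrow> nat \<Rightarrow> bool \<Rightarrow> 'a \<Rightarrow> bool" where
  "pat X i k b \<omega> = (\<forall>j\<le>k. X (i+j) \<omega> = (if even j = b then 1 else 0))"

definition gp :: "real \<Rightarrow> real \<Rightarrow> bool \<Rightarrow> nat \<Rightarrow> real" where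
  "gp p q b k = (\<Prod>j\<le>k. if even j = b then p else q)"

lemma sum_eq_card_iff:
  fixes f :: "'b \<Rightarrow> real"
  assumes "finite A" "\<And>x. x \<in> A \<Longrightarrow> f x \<le> 1"
  shows "sum f A = real (card A) \<longleftrightarrow> (\<forall>x\<in>A. f x = 1)"
proof -
  have "sum f A = real (card A) \<longleftrightarrow> sum (\<lambda>x. 1 - f x) A = 0"
    by (simp add: sum_subtractf) arith
  also have "\<dots> \<longleftrightarrow> (\<forall>x\<in>A. 1 - f x = 0)"
    using assms by (intro sum_nonneg_eq_0_iff) auto
  finally show ?thesis by auto
qed

lemma switches_alt:
  assumes "\<And>l. l \<ge> 1 \<Longrightarrow> X l \<omega> = 0 \<or> X l \<omega> = 1" and "n \<ge> 1" and "i \<ge> 1"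
  shows "switches X n i \<omega> = real n - 1 \<longleftrightarrow> alt X i (n-1) \<omega>"
proof -
  have t: "(1 - X (l-1) \<omega>) * X l \<omega> + X (l-1) \<omega> * (1 - X l \<omega>) = (if X (l-1) \<omega> \<noteq> X l \<omega> then 1 else 0)" if "l \<in> {i+1..n+i-1}" for l
    using assms(1)[of l] assms(1)[of "l-1"] that assms(3) by auto
  have c: "card {i+1..n+i-1} = n - 1" using assms(2) by simp
  have e: "{i+1..n+i-1} = {i+1..i+(n-1)}" using assms(2) by auto
  have "switches X n i \<omega> = (\<Sum>l\<in>{i+1..n+i-1}. (if X (l-1) \<omega> \<noteq> X l \<omega> then 1 else 0))"
    unfolding switches_def using t by (intro sum.cong) auto
  moreover have "real n - 1 = real (card {i+1..n+i-1})" using c assms(2) by simp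
  moreover have "(\<Sum>l\<in>{i+1..n+i-1}. (if X (l-1) \<omega> \<noteq> X l \<omega> then 1 else 0)) = real (card {i+1..n+i-1}) \<longleftrightarrow> (\<forall>l\<in>{i+1..n+i-1}. (if X (l-1) \<omega> \<noteq> X l \<omega> then 1 else 0) = (1::real))"
    by (rule sum_eq_card_iff) auto
  ultimately have "switches X n i \<omega> = real n - 1 \<longleftrightarrow> (\<forall>l\<in>{i+1..n+i-1}. (if X (l-1) \<omega> \<noteq> X l \<omega> then 1 else 0) = (1::real))"
    by (simp only:)
  then show ?thesis unfolding alt_def e by (auto split: if_splits)
qed

lemma alt_mono: "alt X i k \<omega> \<Longrightarrow> k' \<le> k \<Longrightarrow> alt X i k' \<omega>"
  unfolding alt_def by auto

lemma alt_shift: "alt X i k \<omega> \<Longrightarrow> d \<le> k \<Longrightarrow> alt X (i+d) (k-d) \<omega>"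
  unfolding alt_def by auto

lemma gp_SucSuc: "gp p q b (Suc (Suc k)) = gp p q b k * (p * q)"
  unfolding gp_def by (simp add: atMost_Suc)

lemma gp_bounds:
  assumes "0 < p" "p < 1" "q = 1 - p"
  shows "gp p q True k + gp p q False k \<le> sqrt (p*q) ^ k \<and> sqrt (p*q) ^ (k+1) \<le> gp p q True k + gp p q False k"
proof -
  define r where "r = sqrt (p*q)"
  have pq: "0 < p*q" using assms by simp
  have r2: "r^2 = p*q" unfolding r_def using pq by simp
  have r0: "0 < r" unfolding r_def using pq by simp
  have "0 \<le> (2*p-1)^2" by simp
  then have "4 * (p*q) \<le> 1" unfolding assms(3) by (simp add: power2_eq_square algebra_simps)
  then have "(2*r)^2 \<le> 1^2" using r2 by (simp add: power_mult_distrib)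
  then have r12: "2 * r \<le> 1" by (rule power2_le_imp_le) simp
  define P where "P k \<longleftrightarrow> (gp p q True k + gp p q False k \<le> r ^ k \<and> r ^ (k+1) \<le> gp p q True k + gp p q False k)" for k
  have "P k \<and> P (Suc k)" for k
  proof (induction k)
    case 0
    have g0: "gp p q True 0 + gp p q False 0 = 1" unfolding gp_def using assms by simp
    have g1: "gp p q True 1 + gp p q False 1 = 2 * r^2" unfolding gp_def using r2 by (simp add: atMost_Suc)
    have a: "r \<le> 1" using r12 r0 by simp
    have b: "2 * r^2 \<le> r" using r12 r0 mult_right_mono[OF r12, of r] by (simp add: power2_eq_square)
    have c: "r^2 \<le> 2 * r^2" by simp
    show ?case using g0 g1 a b c unfolding P_def by (simp add: power2_eq_square)
  next
    case (Suc k)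
    define F where "F k = gp p q True k + gp p q False k" for k
    have FS: "F (Suc (Suc k)) = F k * r^2"
      unfolding F_def by (simp add: gp_SucSuc r2 algebra_simps)
    have h1: "F k \<le> r^k" "r^(k+1) \<le> F k" "F (Suc k) \<le> r^(Suc k)" "r^(Suc k + 1) \<le> F (Suc k)"
      using Suc unfolding P_def F_def by auto
    have e1: "r^(Suc (Suc k)) = r^k * r^2" by (simp only: power_add[symmetric]) simp
    have e2: "r^(Suc (Suc k) + 1) = r^(k+1) * r^2" by (simp only: power_add[symmetric]) simp
    have "F (Suc (Suc k)) \<le> r^(Suc (Suc k))" unfolding FS e1 using h1 by (intro mult_right_mono) auto
    moreover have "r^(Suc (Suc k) + 1) \<le> F (Suc (Suc k))" unfolding FS e2 using h1 by (intro mult_right_mono) auto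
    ultimately show ?case using h1 unfolding P_def F_def by simp
  qed
  then have "P k" by blast
  then show ?thesis unfolding P_def r_def by simp
qed

lemma powr_anti:
  fixes r :: real
  assumes "0 < r" "r < 1" "b \<le> a"
  shows "r powr a \<le> r powr b"
proof -
  have "ln r < 0" using assms by simp
  then have "a * ln r \<le> b * ln r" using assms(3) by (simp add: mult_right_mono_neg)
  then show ?thesis using assms by (simp add: powr_def)
qed

lemma powr_log_inv:
  fixes r x a :: real
  assumes "0 < r" "r < 1" "0 < x"
  shows "r powr (a * log (1/r) x) = x powr (- a)"
proof -
  have "ln r \<noteq> 0" using assms by simp
  then have "a * log (1/r) x * ln r = - a * ln x"
    unfolding log_def using assms by (simp add: ln_div field_simps)
  then show ?thesis using assms by (simp add: powr_def)
qed



locale sw = prob_space M for M :: "'a measure" +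
  fixes X :: "nat \<Rightarrow> 'a \<Rightarrow> real" and p q :: real
  assumes p0: "0 < p" and p1: "p < 1" and qdef: "q = 1 - p"
    and Xm: "\<And>i. i \<ge> 1 \<Longrightarrow> X i \<in> borel_measurable M"
    and ind: "indep_vars (\<lambda>_. borel) X {1..}"
    and P1: "\<And>i. i \<ge> 1 \<Longrightarrow> prob {\<omega> \<in> space M. X i \<omega> = 1} = p"
    and P0: "\<And>i. i \<ge> 1 \<Longrightarrow> prob {\<omega> \<in> space M. X i \<omega> = 0} = q"
begin

definition "G = {\<omega> \<in> space M. \<forall>l. 1 \<le> l \<longrightarrow> X l \<omega> = 0 \<or> X l \<omega> = 1}"

lemma ev_eq: assumes "1 \<le> i" shows "{\<omega> \<in> space M. X i \<omega> = c} \<in> events"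
proof -
  have [measurable]: "X i \<in> borel_measurable M" using Xm assms by auto
  show ?thesis by measurable
qed

lemma ev_neq: assumes "1 \<le> a" "1 \<le> b" shows "{\<omega> \<in> space M. X a \<omega> \<noteq> X b \<omega>} \<in> events"
proof -
  have [measurable]: "X a \<in> borel_measurable M" "X b \<in> borel_measurable M" using Xm assms by auto
  show ?thesis by measurable
qed

lemma G_ev: "G \<in> events"
  unfolding G_def
proof (rule sets.sets_Collect_countable_All)
  fix l
  show "{x \<in> space M. 1 \<le> l \<longrightarrow> X l x = 0 \<or> X l x = 1} \<in> events"
  proof (cases "1 \<le> l")
    case True
    have [measurable]: "X l \<in> borel_measurable M" using Xm True by auto
    show ?thesis by measurable
  next
    case False then show ?thesis by simp
  qed
qed

lemma AE_G: "AE \<omega> in M. \<omega> \<in> G"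
proof -
  have "AE \<omega> in M. 1 \<le> l \<longrightarrow> X l \<omega> = 0 \<or> X l \<omega> = 1" for l
  proof (cases "1 \<le> l")
    case True
    have "{\<omega> \<in> space M. X l \<omega> = 0 \<or> X l \<omega> = 1} = {\<omega> \<in> space M. X l \<omega> = 0} \<union> {\<omega> \<in> space M. X l \<omega> = 1}"
      by auto
    moreover have "prob ({\<omega> \<in> space M. X l \<omega> = 0} \<union> {\<omega> \<in> space M. X l \<omega> = 1}) = q + p"
      using P0[OF True] P1[OF True] ev_eq[OF True]
      by (subst finite_measure_Union) auto
    ultimately have "prob {\<omega> \<in> space M. X l \<omega> = 0 \<or> X l \<omega> = 1} = 1" using qdef by simp
    then have "AE \<omega> in M. \<omega> \<in> {\<omega> \<in> space M. X l \<omega> = 0 \<or> X l \<omega> = 1}" by (rule AE_prob_1)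
    then show ?thesis by eventually_elim auto
  qed simp
  then have "AE \<omega> in M. \<forall>l. 1 \<le> l \<longrightarrow> X l \<omega> = 0 \<or> X l \<omega> = 1"
    by (subst AE_all_countable) auto
  with AE_space show ?thesis unfolding G_def by eventually_elim auto
qed

lemma pat_ev: assumes "1 \<le> i" shows "{\<omega> \<in> space M. pat X i k b \<omega>} \<in> events"
proof -
  have "{\<omega> \<in> space M. pat X i k b \<omega>} = {\<omega> \<in> space M. \<forall>j\<in>{..k}. X (i+j) \<omega> = (if even j = b then 1 else 0)}"
    unfolding pat_def by auto
  also have "\<dots> \<in> events"
    by (rule sets.sets_Collect_finite_All) (use ev_eq assms in auto)
  finally show ?thesis .
qed

lemma alt_ev: assumes "1 \<le> i" shows "{\<omega> \<in> space M. alt X i k \<omega>} \<in> events"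
  unfolding alt_def
  by (rule sets.sets_Collect_finite_All) (use ev_neq assms in auto)

lemma pat_prob: assumes "1 \<le> i" shows "prob {\<omega> \<in> space M. pat X i k b \<omega>} = gp p q b k"
proof -
  define v where "v = (\<lambda>j::nat. if even j = b then 1 else 0::real)"
  have eq: "{\<omega> \<in> space M. pat X i k b \<omega>} = (\<Inter>l\<in>{i..i+k}. X l -` {v (l - i)} \<inter> space M)"
  proof (intro equalityI subsetI)
    fix \<omega> assume "\<omega> \<in> {\<omega> \<in> space M. pat X i k b \<omega>}"
    then have a: "\<omega> \<in> space M" "\<And>j. j \<le> k \<Longrightarrow> X (i+j) \<omega> = v j" unfolding pat_def v_def by auto
    show "\<omega> \<in> (\<Inter>l\<in>{i..i+k}. X l -` {v (l - i)} \<inter> space M)"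
    proof (intro InterI, clarify)
      fix l assume l: "l \<in> {i..i+k}"
      then have "l - i \<le> k" "i + (l - i) = l" by auto
      then show "\<omega> \<in> X l -` {v (l - i)} \<inter> space M" using a(1) a(2)[of "l-i"] by simp
    qed
  next
    fix \<omega> assume a: "\<omega> \<in> (\<Inter>l\<in>{i..i+k}. X l -` {v (l - i)} \<inter> space M)"
    show "\<omega> \<in> {\<omega> \<in> space M. pat X i k b \<omega>}"
      unfolding pat_def
    proof (intro CollectI conjI allI impI)
      show "\<omega> \<in> space M" using a by auto
      fix j assume "j \<le> k"
      then have "i + j \<in> {i..i+k}" by simp
      then show "X (i + j) \<omega> = (if even j = b then 1 else 0)" using a unfolding v_def by auto
    qed
  qed
  have "prob (\<Inter>l\<in>{i..i+k}. X l -` {v (l - i)} \<inter> space M) = (\<Prod>l\<in>{i..i+k}. prob (X l -` {v (l - i)} \<inter> space M))"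
    by (rule indep_varsD[OF ind]) (use assms in auto)
  also have "\<dots> = (\<Prod>l\<in>{i..i+k}. (if even (l - i) = b then p else q))"
  proof (rule prod.cong)
    fix l assume l: "l \<in> {i..i+k}"
    then have l1: "1 \<le> l" using assms by auto
    have "X l -` {v (l - i)} \<inter> space M = {\<omega> \<in> space M. X l \<omega> = v (l - i)}" by auto
    then show "prob (X l -` {v (l - i)} \<inter> space M) = (if even (l - i) = b then p else q)"
      using P0[OF l1] P1[OF l1] unfolding v_def by auto
  qed simp
  also have "\<dots> = (\<Prod>j\<in>{0..k}. (if even j = b then p else q))"
    using prod.shift_bounds_cl_nat_ivl[of "\<lambda>l. if even (l - i) = b then p else q" 0 i k]
    by (simp add: add.commute)
  finally show ?thesis unfolding eq gp_def by (simp add: atLeast0AtMost)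
qed

lemma pat_alt: assumes "pat X i k b \<omega>" shows "alt X i k \<omega>"
  unfolding alt_def
proof
  fix l assume l: "l \<in> {i+1..i+k}"
  define j where "j = l - 1 - i"
  have j: "j \<le> k" "Suc j \<le> k" "i + j = l - 1" "i + Suc j = l" using l unfolding j_def by auto
  have "X (i+j) \<omega> = (if even j = b then 1 else 0)" "X (i + Suc j) \<omega> = (if even (Suc j) = b then 1 else 0)"
    using assms j unfolding pat_def by blast+
  then have "X (l-1) \<omega> = (if even j = b then 1 else 0)" "X l \<omega> = (if even (Suc j) = b then 1 else 0)"
    unfolding j(3) j(4) .
  then show "X (l - 1) \<omega> \<noteq> X l \<omega>" by (cases b) simp_all
qed

lemma alt_pat: assumes "\<omega> \<in> G" "1 \<le> i" "alt X i k \<omega>" shows "pat X i k True \<omega> \<or> pat X i k False \<omega>"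
proof -
  define b where "b = (X i \<omega> = 1)"
  have G: "\<And>l. 1 \<le> l \<Longrightarrow> X l \<omega> = 0 \<or> X l \<omega> = 1" using assms(1) unfolding G_def by auto
  have "j \<le> k \<longrightarrow> X (i+j) \<omega> = (if even j = b then 1 else 0)" for j
  proof (induction j)
    case 0 show ?case using G[OF assms(2)] unfolding b_def by (cases "X i \<omega> = 1") simp_all
  next
    case (Suc j)
    show ?case
    proof
      assume jk: "Suc j \<le> k"
      then have "i + Suc j \<in> {i+1..i+k}" by simp
      then have "X (i + j) \<omega> \<noteq> X (i + Suc j) \<omega>" using assms(3) unfolding alt_def by fastforce
      moreover have "X (i + j) \<omega> = (if even j = b then 1 else 0)" using Suc jk by simp
      moreover have "X (i + Suc j) \<omega> = 0 \<or> X (i + Suc j) \<omega> = 1" using G assms(2) by simp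
      ultimately show "X (i + Suc j) \<omega> = (if even (Suc j) = b then 1 else 0)" by auto
    qed
  qed
  then have "pat X i k b \<omega>" unfolding pat_def by blast
  then show ?thesis by (cases b) auto
qed

lemma pat_disj: "pat X i k True \<omega> \<Longrightarrow> \<not> pat X i k False \<omega>"
  unfolding pat_def by (metis add_0_right even_zero le0 zero_neq_one)

lemma alt_upper: assumes "1 \<le> i" shows "prob {\<omega> \<in> space M. \<omega> \<in> G \<and> alt X i k \<omega>} \<le> sqrt (p*q) ^ k"
proof -
  have "prob {\<omega> \<in> space M. \<omega> \<in> G \<and> alt X i k \<omega>} \<le> prob ({\<omega> \<in> space M. pat X i k True \<omega>} \<union> {\<omega> \<in> space M. pat X i k False \<omega>})"
  proof (rule finite_measure_mono)
    show "{\<omega> \<in> space M. \<omega> \<in> G \<and> alt X i k \<omega>} \<subseteq> {\<omega> \<in> space M. pat X i k True \<omega>} \<union> {\<omega> \<in> space M. pat X i k False \<omega>}"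
      using alt_pat[OF _ assms] by blast
    show "{\<omega> \<in> space M. pat X i k True \<omega>} \<union> {\<omega> \<in> space M. pat X i k False \<omega>} \<in> events"
      using pat_ev[OF assms] by blast
  qed
  also have "\<dots> \<le> prob {\<omega> \<in> space M. pat X i k True \<omega>} + prob {\<omega> \<in> space M. pat X i k False \<omega>}"
    by (rule measure_Un_le) (use pat_ev[OF assms] in blast)+
  also have "\<dots> = gp p q True k + gp p q False k" using pat_prob[OF assms] by simp
  also have "\<dots> \<le> sqrt (p*q) ^ k" using gp_bounds[OF p0 p1 qdef] by blast
  finally show ?thesis .
qed

lemma alt_lower: assumes "1 \<le> i" shows "sqrt (p*q) ^ (k+1) \<le> prob {\<omega> \<in> space M. alt X i k \<omega>}"
proof -
  have "sqrt (p*q) ^ (k+1) \<le> gp p q True k + gp p q False k" using gp_bounds[OF p0 p1 qdef] by blast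
  also have "\<dots> = prob {\<omega> \<in> space M. pat X i k True \<omega>} + prob {\<omega> \<in> space M. pat X i k False \<omega>}"
    using pat_prob[OF assms] by simp
  also have "\<dots> = prob ({\<omega> \<in> space M. pat X i k True \<omega>} \<union> {\<omega> \<in> space M. pat X i k False \<omega>})"
    by (rule finite_measure_Union[symmetric]) (use pat_ev[OF assms] pat_disj in blast)+
  also have "\<dots> \<le> prob {\<omega> \<in> space M. alt X i k \<omega>}"
    by (rule finite_measure_mono) (use pat_alt alt_ev[OF assms] in blast)+
  finally show ?thesis .
qed

lemma block_lt: "(t::nat) < t' \<Longrightarrow> t*(k+1) + k < t'*(k+1)"
proof -
  assume "t < t'"
  then have "Suc t * (k+1) \<le> t' * (k+1)" by (intro mult_le_mono1) simp
  then show ?thesis by simp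
qed

lemma PiM_neq_sets:
  assumes "a \<in> K" "b \<in> K"
  shows "{f \<in> space (PiM K (\<lambda>_. borel)). (f a :: real) \<noteq> f b} \<in> sets (PiM K (\<lambda>_. borel))"
proof -
  have e: "{f \<in> space (PiM K (\<lambda>_. borel)). (f a :: real) = f b} \<in> sets (PiM K (\<lambda>_. borel))"
    by (rule borel_measurable_eq; rule measurable_component_singleton; fact)
  have "{f \<in> space (PiM K (\<lambda>_. borel)). (f a :: real) \<noteq> f b} = space (PiM K (\<lambda>_. borel)) - {f \<in> space (PiM K (\<lambda>_. borel)). (f a :: real) = f b}"
    by auto
  also have "\<dots> \<in> sets (PiM K (\<lambda>_. borel))" by (intro sets.Diff sets.top e)
  finally show ?thesis .
qed

lemma blocks:
  fixes k T :: nat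
  shows "prob {\<omega> \<in> space M. \<forall>t<T. \<not> alt X (1 + t*(k+1)) k \<omega>} \<le> (1 - sqrt (p*q)^(k+1))^T"
proof (cases "T = 0")
  case True then show ?thesis by simp
next
  case False
  define s where "s t = 1 + t*(k+1)" for t
  define K where "K t = {s t .. s t + k}" for t
  define A where "A t = {f \<in> space (PiM (K t) (\<lambda>_. borel)). \<not> (\<forall>l\<in>{s t+1..s t+k}. (f (l-1) :: real) \<noteq> f l)}" for t
  define Y where "Y t \<omega> = restrict (\<lambda>i. X i \<omega>) (K t)" for t \<omega>
  have disj: "disjoint_family_on K {..<T}"
    unfolding disjoint_family_on_def
  proof (intro ballI impI)
    fix m n assume "m \<in> {..<T}" "n \<in> {..<T}" "m \<noteq> n"
    then consider "m < n" | "n < m" by linarith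
    then show "K m \<inter> K n = {}"
    proof cases
      case 1 then show ?thesis using block_lt[OF 1, of k] unfolding K_def s_def by auto
    next
      case 2 then show ?thesis using block_lt[OF 2, of k] unfolding K_def s_def by auto
    qed
  qed
  have indK: "indep_vars (\<lambda>t. PiM (K t) (\<lambda>_. borel)) Y {..<T}"
    unfolding Y_def by (rule indep_vars_restrict[OF ind _ disj]) (auto simp: K_def s_def)
  have Asets: "A t \<in> sets (PiM (K t) (\<lambda>_. borel))" for t
    unfolding A_def
    by (intro sets.sets_Collect_neg sets.sets_Collect_finite_All PiM_neq_sets) (auto simp: K_def)
  have pre: "Y t -` A t \<inter> space M = {\<omega> \<in> space M. \<not> alt X (s t) k \<omega>}" for t
  proof -
    have "Y t \<omega> \<in> space (PiM (K t) (\<lambda>_. borel))" for \<omega>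
      unfolding Y_def by (simp add: space_PiM)
    moreover have "(\<forall>l\<in>{s t+1..s t+k}. Y t \<omega> (l-1) \<noteq> Y t \<omega> l) \<longleftrightarrow> alt X (s t) k \<omega>" for \<omega>
      unfolding alt_def Y_def by (intro ball_cong) (auto simp: K_def)
    ultimately show ?thesis unfolding A_def by auto
  qed
  have "prob (\<Inter>t\<in>{..<T}. Y t -` A t \<inter> space M) = (\<Prod>t\<in>{..<T}. prob (Y t -` A t \<inter> space M))"
    by (rule indep_varsD[OF indK]) (use False Asets in auto)
  moreover have "(\<Inter>t\<in>{..<T}. Y t -` A t \<inter> space M) = {\<omega> \<in> space M. \<forall>t<T. \<not> alt X (1 + t*(k+1)) k \<omega>}"
    unfolding pre s_def using False by auto
  moreover have "(\<Prod>t\<in>{..<T}. prob (Y t -` A t \<inter> space M)) \<le> (\<Prod>t\<in>{..<T}. 1 - sqrt (p*q)^(k+1))"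
  proof (rule prod_mono, rule conjI)
    fix t assume "t \<in> {..<T}"
    have s1: "1 \<le> s t" unfolding s_def by simp
    have "{\<omega> \<in> space M. \<not> alt X (s t) k \<omega>} = space M - {\<omega> \<in> space M. alt X (s t) k \<omega>}" by auto
    then have e: "prob (Y t -` A t \<inter> space M) = 1 - prob {\<omega> \<in> space M. alt X (s t) k \<omega>}"
      unfolding pre using prob_compl[OF alt_ev[OF s1]] by simp
    show "0 \<le> prob (Y t -` A t \<inter> space M)" by simp
    show "prob (Y t -` A t \<inter> space M) \<le> 1 - sqrt (p*q)^(k+1)"
      unfolding e using alt_lower[OF s1, of k] by simp
  qed
  ultimately show ?thesis by simp
qed

lemma one_minus_pow_le_exp:
  fixes x :: real assumes "0 \<le> x" "x \<le> 1"
  shows "(1 - x)^T \<le> exp (- (x * real T))"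
proof -
  have "(1 - x)^T \<le> exp (-x)^T"
    using exp_ge_add_one_self[of "-x"] assms by (intro power_mono) auto
  also have "\<dots> = exp (- (x * real T))" by (simp add: exp_of_nat_mult[symmetric] mult.commute)
  finally show ?thesis .
qed

lemma r_bounds: "0 < sqrt (p*q)" "sqrt (p*q) < 1"
proof -
  have pq: "0 < p*q" using p0 p1 qdef by simp
  then show "0 < sqrt (p*q)" by simp
  have "0 \<le> (2*p-1)^2" by simp
  then have "4 * (p*q) \<le> 1" unfolding qdef by (simp add: power2_eq_square algebra_simps)
  then have "p*q < 1" by simp
  then show "sqrt (p*q) < 1" using pq by simp
qed

lemma UB:
  assumes e: "0 < \<epsilon>"
  shows "AE \<omega> in M. \<exists>C\<ge>0. \<forall>N\<ge>1. \<forall>n. 1 \<le> n \<and> n \<le> N \<and> \<omega> \<in> switch_event X 1 n N \<longrightarrow>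
            real (n-1) \<le> (1+\<epsilon>) * log (1 / sqrt (p*q)) (real N) + C"
proof -
  define r where "r = sqrt (p*q)"
  have r0: "0 < r" and r1: "r < 1" using r_bounds unfolding r_def by auto
  have base: "1 < 1/r" using r0 r1 by simp
  define L where "L N = log (1/r) (real N)" for N
  have L0: "0 \<le> L N" if "1 \<le> N" for N unfolding L_def using base that by simp
  have Lmono: "L i \<le> L N" if "1 \<le> i" "i \<le> N" for i N
    unfolding L_def using base that by (intro log_mono) auto
  define ku where "ku i = nat \<lceil>(1+\<epsilon>) * L i\<rceil>" for i
  define B where "B i = {\<omega> \<in> space M. 1 \<le> i \<and> \<omega> \<in> G \<and> alt X i (ku i) \<omega>}" for i
  have Bev: "B i \<in> events" for i
  proof (cases "1 \<le> i")
    case True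
    have "B i = G \<inter> {\<omega> \<in> space M. alt X i (ku i) \<omega>}" unfolding B_def using True G_def by auto
    then show ?thesis using G_ev alt_ev[OF True] by auto
  next
    case False then show ?thesis unfolding B_def by simp
  qed
  have Bprob: "prob (B i) \<le> real i powr (-(1+\<epsilon>))" for i
  proof (cases "1 \<le> i")
    case True
    have "prob (B i) = prob {\<omega> \<in> space M. \<omega> \<in> G \<and> alt X i (ku i) \<omega>}" unfolding B_def using True by simp
    also have "\<dots> \<le> r ^ ku i" using alt_upper[OF True] unfolding r_def .
    also have "\<dots> = r powr real (ku i)" using r0 by (simp add: powr_realpow)
    also have "\<dots> \<le> r powr ((1+\<epsilon>) * L i)"
      by (rule powr_anti[OF r0 r1]) (simp add: ku_def real_nat_ceiling_ge)
    also have "\<dots> = real i powr (-(1+\<epsilon>))"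
      unfolding L_def using powr_log_inv[OF r0 r1, of "real i" "1+\<epsilon>"] True by simp
    finally show ?thesis .
  next
    case False then show ?thesis unfolding B_def by simp
  qed
  have "summable (\<lambda>i. real i powr (-(1+\<epsilon>)))" using e by (subst summable_real_powr_iff) simp
  then have summ: "summable (\<lambda>i. prob (B i))"
    by (rule summable_comparison_test') (use Bprob in simp)
  have "AE \<omega> in M. eventually (\<lambda>n. \<omega> \<in> space M - B n) sequentially"
    by (rule borel_cantelli_AE1[OF Bev _ summ]) (simp add: less_top[symmetric])
  with AE_G show ?thesis
  proof (eventually_elim)
    fix \<omega> assume \<omega>G: "\<omega> \<in> G" and ev: "eventually (\<lambda>n. \<omega> \<in> space M - B n) sequentially"
    then obtain i0 where i0: "\<And>i. i \<ge> i0 \<Longrightarrow> \<omega> \<in> space M - B i" unfolding eventually_sequentially by blast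
    define i1 where "i1 = max i0 1"
    have notalt: "\<not> alt X i (ku i) \<omega>" if "i \<ge> i1" for i
      using i0[of i] that \<omega>G unfolding i1_def B_def G_def by auto
    have G01: "\<And>l. 1 \<le> l \<Longrightarrow> X l \<omega> = 0 \<or> X l \<omega> = 1" using \<omega>G unfolding G_def by auto
    define C where "C = real i1 + real (ku i1)"
    have "real (n-1) \<le> (1+\<epsilon>) * L N + C" if N1: "1 \<le> N" and n: "1 \<le> n" "n \<le> N" "\<omega> \<in> switch_event X 1 n N" for N n
    proof -
      obtain i where i: "i \<in> {1..1+N-n+1}" "switches X n i \<omega> = real n - 1"
        using n(3) unfolding switch_event_def by auto
      have alt: "alt X i (n-1) \<omega>" using switches_alt[of X \<omega> n i] G01 n i by auto
      define k where "k = n - 1"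
      have nonneg: "0 \<le> (1+\<epsilon>) * L N" using L0[OF N1] e by simp
      show ?thesis
      proof (cases "k = 0")
        case True then show ?thesis using nonneg unfolding k_def C_def by simp
      next
        case False
        then have iN: "i \<le> N" using i(1) n(2) unfolding k_def by auto
        have i1: "1 \<le> i" using i(1) by simp
        show ?thesis
        proof (cases "i \<ge> i1")
          case True
          have "k < ku i"
          proof (rule ccontr)
            assume "\<not> k < ku i"
            then have "alt X i (ku i) \<omega>" using alt_mono[OF alt[folded k_def]] by simp
            then show False using notalt[OF True] by simp
          qed
          then have "real k + 1 \<le> real (ku i)" by simp
          also have "\<dots> < (1+\<epsilon>) * L i + 1"
            unfolding ku_def using L0[OF i1] e by (simp add: ceiling_correct) linarith
          also have "\<dots> \<le> (1+\<epsilon>) * L N + 1"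
            using Lmono[OF i1 iN] e by (simp add: mult_left_mono)
          finally show ?thesis unfolding k_def C_def by simp
        next
          case False
          have "k < i1 + ku i1"
          proof (cases "k \<le> i1 - i")
            case True then show ?thesis using i1 by (auto simp: i1_def)
          next
            case kd: False
            have "alt X (i + (i1 - i)) (k - (i1 - i)) \<omega>"
              using alt_shift[OF alt[folded k_def], of "i1 - i"] kd by simp
            moreover have "i + (i1 - i) = i1" using False by simp
            ultimately have "alt X i1 (k - (i1 - i)) \<omega>" by simp
            then have "k - (i1 - i) < ku i1"
              using notalt[of i1] alt_mono[of X i1 "k - (i1 - i)" \<omega> "ku i1"] by (cases "ku i1 \<le> k - (i1 - i)") auto
            then show ?thesis by simp
          qed
          then have "real k \<le> C" unfolding C_def by simp
          then show ?thesis using nonneg unfolding k_def by simp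
        qed
      qed
    qed
    moreover have "0 \<le> C" unfolding C_def by simp
    ultimately show "\<exists>C\<ge>0. \<forall>N\<ge>1. \<forall>n. 1 \<le> n \<and> n \<le> N \<and> \<omega> \<in> switch_event X 1 n N \<longrightarrow>
            real (n-1) \<le> (1+\<epsilon>) * log (1 / sqrt (p*q)) (real N) + C"
      unfolding L_def r_def by blast
  qed
qed

lemma asym:
  fixes r c e :: real
  assumes "r > 0" "c > 0" "e > 0" "e < 1"
  shows "eventually (\<lambda>N::nat. 2 * ln (real N) \<le> r * real N powr e / (ln (real N) / c + 1) - 1) sequentially"
  using assms by real_asymp

lemma LB_key:
  fixes r \<epsilon> :: real and N :: nat
  assumes r0: "0 < r" and r1: "r < 1" and e: "0 < \<epsilon>" "\<epsilon> < 1" and N1: "1 \<le> N"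
    and as: "2 * ln (real N) \<le> r * real N powr \<epsilon> / (ln (real N) / ln (1/r) + 1) - 1"
  shows "exp (- (r ^ (nat \<lfloor>(1-\<epsilon>) * log (1/r) (real N)\<rfloor> + 1) * real (N div (nat \<lfloor>(1-\<epsilon>) * log (1/r) (real N)\<rfloor> + 1))))
         \<le> real N powr (-2)"
proof -
  define LN where "LN = log (1/r) (real N)"
  define y where "y = (1-\<epsilon>) * LN"
  define k where "k = nat \<lfloor>y\<rfloor>"
  define T where "T = N div (k+1)"
  define R where "R = r^(k+1)"
  define A where "A = real k + 1"
  have base: "1 < 1/r" using r0 r1 by simp
  have LN0: "0 \<le> LN" unfolding LN_def using base N1 by simp
  have y0: "0 \<le> y" unfolding y_def using LN0 e by simp
  have ky: "real k \<le> y" unfolding k_def using y0 by linarith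
  have yLN: "y \<le> LN" unfolding y_def using LN0 e by (simp add: mult_left_le_one_le)
  have Npos: "0 < real N" using N1 by simp
  have LNdef: "LN = ln (real N) / ln (1/r)" unfolding LN_def log_def ..
  have rk: "real N powr (\<epsilon> - 1) \<le> r ^ k"
  proof -
    have "r ^ k = r powr real k" using r0 by (simp add: powr_realpow)
    also have "\<dots> \<ge> r powr y" by (rule powr_anti[OF r0 r1 ky])
    moreover have "r powr y = real N powr (\<epsilon> - 1)"
      unfolding y_def LN_def using powr_log_inv[OF r0 r1 Npos, of "1-\<epsilon>"] by simp
    ultimately show ?thesis by simp
  qed
  have A0: "0 < A" unfolding A_def by simp
  have ALN: "A \<le> LN + 1" unfolding A_def using ky yLN by simp
  have NT: "N < (T+1)*(k+1)"
  proof -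
    have "N = T*(k+1) + N mod (k+1)" unfolding T_def by (rule div_mult_mod_eq[symmetric])
    moreover have "N mod (k+1) < k+1" by simp
    ultimately show ?thesis by (simp only: algebra_simps)
  qed
  then have "real N < real ((T+1)*(k+1))" by (simp only: of_nat_less_iff)
  then have "real N < (real T + 1) * A" unfolding A_def by (simp add: algebra_simps)
  then have "real N / A < real T + 1" using A0 by (simp add: pos_divide_less_eq)
  then have TA: "real N / A - 1 \<le> real T" by simp
  have R0: "0 \<le> R" unfolding R_def using r0 by simp
  have R1: "R \<le> 1" unfolding R_def using r0 r1 by (intro power_le_one) auto
  have Rlow: "r * real N powr (\<epsilon> - 1) \<le> R" unfolding R_def using rk r0 by simp
  have f1: "R * real T \<ge> R * (real N / A - 1)" using TA R0 by (rule mult_left_mono)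
  have f2: "R * (real N / A) \<ge> (r * real N powr (\<epsilon> - 1)) * (real N / (LN + 1))"
  proof (rule mult_mono[OF Rlow])
    show "real N / (LN + 1) \<le> real N / A" using A0 ALN Npos by (intro divide_left_mono) auto
  qed (use R0 Npos LN0 in auto)
  have f3: "(r * real N powr (\<epsilon> - 1)) * (real N / (LN + 1)) = r * real N powr \<epsilon> / (LN + 1)"
  proof -
    have "real N powr (\<epsilon> - 1) * real N = real N powr \<epsilon>"
      using Npos powr_add[of "real N" "\<epsilon> - 1" 1] by simp
    then show ?thesis by (simp add: field_simps)
  qed
  have f4: "R * (real N / A - 1) = R * (real N / A) - R" by (simp add: right_diff_distrib)
  have "R * real T \<ge> r * real N powr \<epsilon> / (LN + 1) - 1"
    using f1 f2[unfolded f3] f4 R1 by linarith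
  then have "R * real T \<ge> 2 * ln (real N)" using as unfolding LNdef by linarith
  then have "exp (- (R * real T)) \<le> exp (- (2 * ln (real N)))" by simp
  also have "\<dots> = real N powr (-2)" using Npos by (simp add: powr_def)
  finally show ?thesis unfolding R_def T_def k_def y_def LN_def .
qed

lemma LB:
  assumes e: "0 < \<epsilon>" "\<epsilon> < 1"
  shows "AE \<omega> in M. eventually (\<lambda>N. \<exists>n. 1 \<le> n \<and> n \<le> N \<and> \<omega> \<in> switch_event X 1 n N \<and>
            (1-\<epsilon>) * log (1 / sqrt (p*q)) (real N) - 1 \<le> real (n-1)) sequentially"
proof -
  define r where "r = sqrt (p*q)"
  have r0: "0 < r" and r1: "r < 1" using r_bounds unfolding r_def by auto
  have base: "1 < 1/r" using r0 r1 by simp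
  define L where "L N = log (1/r) (real N)" for N
  define kl where "kl N = nat \<lfloor>(1-\<epsilon>) * L N\<rfloor>" for N
  define TT where "TT N = N div (kl N + 1)" for N
  define E where "E N = {\<omega> \<in> space M. \<forall>t<TT N. \<not> alt X (1 + t*(kl N+1)) (kl N) \<omega>}" for N
  have Eev: "E N \<in> events" for N
  proof -
    have "E N = {\<omega> \<in> space M. \<forall>t\<in>{..<TT N}. \<not> alt X (1 + t*(kl N+1)) (kl N) \<omega>}" unfolding E_def by auto
    also have "\<dots> \<in> events"
      by (intro sets.sets_Collect_finite_All sets.sets_Collect_neg alt_ev) auto
    finally show ?thesis .
  qed
  have Eprob: "prob (E N) \<le> exp (- (r^(kl N+1) * real (TT N)))" for N
  proof -
    have "prob (E N) \<le> (1 - r^(kl N+1))^(TT N)" unfolding E_def TT_def r_def by (rule blocks)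
    also have "\<dots> \<le> exp (- (r^(kl N+1) * real (TT N)))"
    proof (rule one_minus_pow_le_exp)
      show "0 \<le> r^(kl N+1)" using r0 by simp
      show "r^(kl N+1) \<le> 1" using r0 r1 by (intro power_le_one) auto
    qed
    finally show ?thesis .
  qed
  have "eventually (\<lambda>N::nat. 2 * ln (real N) \<le> r * real N powr \<epsilon> / (ln (real N) / ln (1/r) + 1) - 1) sequentially"
    using base r0 e by (intro asym) auto
  moreover have "eventually (\<lambda>N::nat. 1 \<le> N) sequentially" by (rule eventually_ge_at_top)
  ultimately have evb: "eventually (\<lambda>N. norm (prob (E N)) \<le> real N powr (-2)) sequentially"
  proof eventually_elim
    case (elim N)
    have "prob (E N) \<le> exp (- (r^(kl N+1) * real (TT N)))" by (rule Eprob)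
    also have "\<dots> \<le> real N powr (-2)"
      unfolding TT_def kl_def L_def using LB_key[OF r0 r1 e elim(2) elim(1)] .
    finally show ?case by simp
  qed
  have "summable (\<lambda>N. real N powr (-2))" by (subst summable_real_powr_iff) simp
  with evb have summ: "summable (\<lambda>N. prob (E N))" by (rule summable_comparison_test_ev)
  have "AE \<omega> in M. eventually (\<lambda>n. \<omega> \<in> space M - E n) sequentially"
    by (rule borel_cantelli_AE1[OF Eev _ summ]) (simp add: less_top[symmetric])
  with AE_G show ?thesis
  proof (eventually_elim)
    fix \<omega> assume \<omega>G: "\<omega> \<in> G" and ev: "eventually (\<lambda>n. \<omega> \<in> space M - E n) sequentially"
    have G01: "\<And>l. 1 \<le> l \<Longrightarrow> X l \<omega> = 0 \<or> X l \<omega> = 1" using \<omega>G unfolding G_def by auto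
    have \<omega>sp: "\<omega> \<in> space M" using \<omega>G unfolding G_def by auto
    from ev eventually_ge_at_top[of 1]
    show "eventually (\<lambda>N. \<exists>n. 1 \<le> n \<and> n \<le> N \<and> \<omega> \<in> switch_event X 1 n N \<and>
            (1-\<epsilon>) * log (1 / sqrt (p*q)) (real N) - 1 \<le> real (n-1)) sequentially"
    proof eventually_elim
      case (elim N)
      define k where "k = kl N"
      define T where "T = TT N"
      from elim(1) \<omega>sp obtain t where t: "t < T" "alt X (1 + t*(k+1)) k \<omega>"
        unfolding E_def k_def T_def by auto
      have T1: "1 \<le> T" using t by simp
      have "T * (k+1) \<le> N" unfolding T_def TT_def k_def by (rule div_times_less_eq_dividend)
      moreover have "(t+1) * (k+1) \<le> T * (k+1)" using t(1) by (intro mult_le_mono1) simp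
      ultimately have tk: "(t+1)*(k+1) \<le> N" by linarith
      have tkk: "(t+1)*(k+1) = t*(k+1) + (k+1)" by (simp only: add_mult_distrib mult.left_neutral)
      have h: "t*(k+1) + (k+1) \<le> N" using tk unfolding tkk .
      then have kN: "k + 1 \<le> N" by linarith
      define i where "i = 1 + t*(k+1)"
      have i_rng: "i \<in> {1..1 + N - (k+1) + 1}" unfolding i_def using h kN by (simp only: atLeastAtMost_iff) arith
      have sw: "switches X (k+1) i \<omega> = real (k+1) - 1"
        using switches_alt[of X \<omega> "k+1" i] G01 t(2) unfolding i_def by simp
      have "\<omega> \<in> switch_event X 1 (k+1) N" unfolding switch_event_def using i_rng sw by blast
      moreover have "(1-\<epsilon>) * L N - 1 \<le> real k"
      proof -
        have "0 \<le> L N" unfolding L_def using base elim(2) by simp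
        then have "0 \<le> (1-\<epsilon>) * L N" using e by simp
        then show ?thesis unfolding k_def kl_def by linarith
      qed
      ultimately show ?case using kN unfolding L_def r_def by (intro exI[of _ "k+1"]) auto
    qed
  qed
qed

end


lemma L_at_top:
  fixes a :: real assumes "0 < a"
  shows "filterlim (\<lambda>N::nat. ln (real N) / a) at_top sequentially"
  using assms by real_asymp

theorem theorem2p1:
  fixes M :: "'a measure" and X :: "nat \<Rightarrow> 'a \<Rightarrow> real" and p q :: real
  assumes "prob_space M"
    and "0 < p" and "p < 1" and "q = 1 - p"
    and "\<And>i. i \<ge> 1 \<Longrightarrow> X i \<in> borel_measurable M"
    and "prob_space.indep_vars M (\<lambda>_. borel) X {1..}"
    and "\<And>i. i \<ge> 1 \<Longrightarrow> measure M {\<omega> \<in> space M. X i \<omega> = 1} = p"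
    and "\<And>i. i \<ge> 1 \<Longrightarrow> measure M {\<omega> \<in> space M. X i \<omega> = 0} = q"
  shows "AE \<omega> in M. (\<lambda>N. real (longest_switches X N 1 \<omega>) / log (1 / sqrt (p * q)) (real N))
            \<longlonglongrightarrow> 1"
proof -
  interpret sw M X p q
    using assms unfolding sw_def sw_axioms_def by auto
  define c where "c = 1 / sqrt (p * q)"
  have c1: "1 < c" unfolding c_def using r_bounds by simp
  define L where "L N = log c (real N)" for N
  have Ltop: "filterlim L at_top sequentially"
    unfolding L_def log_def using c1 by (intro L_at_top) simp
  define eps where "eps m = 1 / (real m + 2)" for m :: nat
  have eps0: "0 < eps m" "eps m < 1" for m unfolding eps_def by auto
  have per: "AE \<omega> in M. (\<exists>C\<ge>0. \<forall>N\<ge>1. \<forall>n. 1 \<le> n \<and> n \<le> N \<and> \<omega> \<in> switch_event X 1 n N \<longrightarrow>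
            real (n-1) \<le> (1 + eps m) * L N + C) \<and>
          eventually (\<lambda>N. \<exists>n. 1 \<le> n \<and> n \<le> N \<and> \<omega> \<in> switch_event X 1 n N \<and>
            (1 - eps m) * L N - 1 \<le> real (n-1)) sequentially" for m
    using UB[OF eps0(1)[of m]] LB[OF eps0(1)[of m] eps0(2)[of m]] unfolding L_def c_def by eventually_elim blast
  have "AE \<omega> in M. \<forall>m. (\<exists>C\<ge>0. \<forall>N\<ge>1. \<forall>n. 1 \<le> n \<and> n \<le> N \<and> \<omega> \<in> switch_event X 1 n N \<longrightarrow>
            real (n-1) \<le> (1 + eps m) * L N + C) \<and>
          eventually (\<lambda>N. \<exists>n. 1 \<le> n \<and> n \<le> N \<and> \<omega> \<in> switch_event X 1 n N \<and>
            (1 - eps m) * L N - 1 \<le> real (n-1)) sequentially"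
    unfolding AE_all_countable using per by blast
  then show ?thesis
  proof eventually_elim
    case (elim \<omega>)
    show ?case
    proof (rule tendstoI)
      fix e :: real assume e: "0 < e"
      obtain m :: nat where m: "m > 0" "inverse (real m) < e / 2" using ex_inverse_of_nat_less[of "e/2"] e by auto
      have "eps m < inverse (real m)" unfolding eps_def using m(1) by (simp add: field_simps)
      then have em: "2 * eps m < e" using m(2) by linarith
      from elim[rule_format, of m] obtain C where C: "0 \<le> C"
        "\<And>N n. 1 \<le> N \<Longrightarrow> 1 \<le> n \<Longrightarrow> n \<le> N \<Longrightarrow> \<omega> \<in> switch_event X 1 n N \<Longrightarrow> real (n-1) \<le> (1 + eps m) * L N + C"
        and evL: "eventually (\<lambda>N. \<exists>n. 1 \<le> n \<and> n \<le> N \<and> \<omega> \<in> switch_event X 1 n N \<and>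
            (1 - eps m) * L N - 1 \<le> real (n-1)) sequentially" by blast
      have evbig: "eventually (\<lambda>N. (C + 1) / eps m \<le> L N) sequentially"
        using Ltop by (simp add: filterlim_at_top)
      from evL evbig eventually_ge_at_top[of 1]
      show "eventually (\<lambda>N. dist (real (longest_switches X N 1 \<omega>) / log (1 / sqrt (p * q)) (real N)) 1 < e) sequentially"
      proof eventually_elim
        case (elim N)
        define S where "S = {n - 1 | n. 1 \<le> n \<and> n \<le> N \<and> \<omega> \<in> switch_event X 1 n N}"
        have Sfin: "finite S" unfolding S_def by (rule finite_subset[of _ "{..N}"]) auto
        obtain n0 where n0: "1 \<le> n0" "n0 \<le> N" "\<omega> \<in> switch_event X 1 n0 N" "(1 - eps m) * L N - 1 \<le> real (n0-1)"
          using elim(1) by blast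
        have n0S: "n0 - 1 \<in> S" unfolding S_def using n0 by blast
        have Sne: "S \<noteq> {}" using n0S by blast
        have Mdef: "longest_switches X N 1 \<omega> = Max S" unfolding longest_switches_def S_def ..
        have low: "(1 - eps m) * L N - 1 \<le> real (Max S)"
          using n0(4) Max_ge[OF Sfin n0S] by linarith
        have "Max S \<in> S" using Max_in[OF Sfin Sne] .
        then obtain n1 where n1: "Max S = n1 - 1" "1 \<le> n1" "n1 \<le> N" "\<omega> \<in> switch_event X 1 n1 N"
          unfolding S_def by blast
        have up: "real (Max S) \<le> (1 + eps m) * L N + C" using C(2)[OF elim(3) n1(2-4)] n1(1) by simp
        have e0: "0 < eps m" by (rule eps0)
        have LC: "C + 1 \<le> eps m * L N" using elim(2) e0 by (simp add: divide_le_eq mult.commute)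
        have "0 < eps m * L N" using LC C(1) by linarith
        then have Lpos: "0 < L N" using e0 by (simp add: zero_less_mult_iff)
        have "real (Max S) \<le> (1 + 2 * eps m) * L N" using up LC by (simp add: algebra_simps)
        then have u: "real (Max S) / L N \<le> 1 + 2 * eps m" using Lpos by (simp add: pos_divide_le_eq)
        have "(1 - 2 * eps m) * L N \<le> real (Max S)" using low LC C(1) by (simp add: algebra_simps)
        then have l: "1 - 2 * eps m \<le> real (Max S) / L N" using Lpos by (simp add: pos_le_divide_eq)
        have "\<bar>real (Max S) / L N - 1\<bar> \<le> 2 * eps m" using u l by (simp add: abs_le_iff)
        then show ?case unfolding dist_real_def Mdef L_def c_def using em by simp
      qed
    qed
  qed
qed

end
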